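(* Let $\ell>0$, $m\in\mathbb N^*$ and $\lambda\in(0,m^2]$. Then the only solution $h\in C^4([-\ell,\ell])$ of \[ h^{(iv)}(y)+(\lambda-2m^2)h''(y)+m^2(m^2-\lambda)h(y)=0 \text{ on } (-\ell,\ell),\qquad h(\pm\ell)=h'(\pm\ell)=0, \] is $h\equiv 0$. Consequently, every eigenvalue $\lambda$ of the mixed buckling problem on $\Omega_\ell=(0,\pi)\times(-\ell,\ell)$ (with $u=0$ on $\partial\Omega_\ell$, $u_y=0$ on $y=\pm\ell$, $u_{xx}=0$ on $x\in\{0,\pi\}$) whose eigenfunction $u(x,y)=\sum_{m\ge1}h_m(y)\sin(mx)$ has a nonzero coefficient $h_m$ satisfies $\lambda>m^2$.
   Context: The mixed buckling problem on $\Omega_\ell$ is $\Delta^2u=-\lambda\Delta u$ in $\Omega_\ell$ with the boundary conditions stated. Each Fourier coefficient $h_m$ of an eigenfunction satisfies the displayed ODE together with $h_m(\pm\ell)=h_m'(\pm\ell)=0$. *)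

theory Defs
  imports "HOL-Analysis.Analysis"
begin

definition C4_on :: "real \<Rightarrow> (real \<Rightarrow> real) \<Rightarrow> (real \<Rightarrow> real) \<Rightarrow> (real \<Rightarrow> real)
    \<Rightarrow> (real \<Rightarrow> real) \<Rightarrow> (real \<Rightarrow> real) \<Rightarrow> bool" where
  "C4_on l h h1 h2 h3 h4 \<longleftrightarrow>
     (\<forall>y\<in>{-l..l}. (h has_real_derivative h1 y) (at y within {-l..l})
                 \<and> (h1 has_real_derivative h2 y) (at y within {-l..l})
                 \<and> (h2 has_real_derivative h3 y) (at y within {-l..l})
                 \<and> (h3 has_real_derivative h4 y) (at y within {-l..l}))
     \<and> continuous_on {-l..l} h4"

definition mode_solution :: "real \<Rightarrow> nat \<Rightarrow> real \<Rightarrow> (real \<Rightarrow> real) \<Rightarrow> bool" where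
  "mode_solution l m lam h \<longleftrightarrow>
     (\<exists>h1 h2 h3 h4. C4_on l h h1 h2 h3 h4
        \<and> (\<forall>y\<in>{-l<..<l}. h4 y + (lam - 2 * (real m)^2) * h2 y
                            + (real m)^2 * ((real m)^2 - lam) * h y = 0)
        \<and> h l = 0 \<and> h (-l) = 0 \<and> h1 l = 0 \<and> h1 (-l) = 0)"

end

theory Submission
  imports Defs
begin

lemma part1:
  fixes l :: real and m :: nat
  assumes lpos: "l > 0" and m1: "m \<ge> 1"
    and lam: "0 < lam" "lam \<le> (real m)^2" and ms: "mode_solution l m lam h"
  shows "\<forall>y\<in>{-l..l}. h y = 0"
proof -
  define M where "M = (real m)^2"
  have M1: "M \<ge> 1" using m1 unfolding M_def by simp
  obtain h1 h2 h3 h4 where C: "C4_on l h h1 h2 h3 h4"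
    and ode: "\<forall>y\<in>{-l<..<l}. h4 y + (lam - 2 * (real m)^2) * h2 y
                            + (real m)^2 * ((real m)^2 - lam) * h y = 0"
    and bc: "h l = 0" "h (-l) = 0" "h1 l = 0" "h1 (-l) = 0"
    using ms unfolding mode_solution_def by blast
  have D: "\<And>y. y \<in> {-l..l} \<Longrightarrow> (h has_real_derivative h1 y) (at y within {-l..l})
                 \<and> (h1 has_real_derivative h2 y) (at y within {-l..l})
                 \<and> (h2 has_real_derivative h3 y) (at y within {-l..l})
                 \<and> (h3 has_real_derivative h4 y) (at y within {-l..l})"
    using C unfolding C4_on_def by blast
  define c where "c = 2 * M - lam"
  have cpos: "c > 0" using lam M1 unfolding c_def M_def by simp
  define k where "k = M * (M - lam)"
  have knn: "k \<ge> 0" using lam M1 unfolding k_def M_def by simp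
  define G where "G y = h3 y * h y - h2 y * h1 y - c * (h1 y * h y)" for y
  define G' where "G' y = h4 y * h y + h3 y * h1 y - (h3 y * h1 y + h2 y * h2 y)
       - c * (h2 y * h y + h1 y * h1 y)" for y
  have DG: "(G has_real_derivative G' y) (at y within {-l..l})" if "y \<in> {-l..l}" for y
  proof -
    from D[OF that] have a: "(h has_real_derivative h1 y) (at y within {-l..l})"
      and b: "(h1 has_real_derivative h2 y) (at y within {-l..l})"
      and cc: "(h2 has_real_derivative h3 y) (at y within {-l..l})"
      and d: "(h3 has_real_derivative h4 y) (at y within {-l..l})" by auto
    have "((\<lambda>y. h3 y * h y - h2 y * h1 y - c * (h1 y * h y)) has_real_derivative
        (h4 y * h y + h3 y * h1 y - (h3 y * h1 y + h2 y * h2 y) - c * (h2 y * h y + h1 y * h1 y)))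
        (at y within {-l..l})"
      using DERIV_diff[OF DERIV_diff[OF DERIV_mult[OF d a] DERIV_mult[OF cc b]] DERIV_cmult[OF DERIV_mult[OF b a]], of c]
      by (rule DERIV_cong) (simp add: algebra_simps)
    then show ?thesis unfolding G_def G'_def .
  qed
  have G'int: "G' y = 0 - (h2 y)^2 - c * (h1 y)^2 - k * (h y)^2" if "y \<in> {-l<..<l}" for y
  proof -
    have e: "h4 y = - (lam - 2 * M) * h2 y - M * (M - lam) * h y"
      using ode that unfolding M_def by (simp add: algebra_simps)
    show ?thesis unfolding G'_def c_def k_def e by (simp add: algebra_simps power2_eq_square)
  qed
  have G'nonpos: "G' y \<le> 0" if "y \<in> {-l<..<l}" for y
  proof -
    have "c * (h1 y)^2 \<ge> 0" "k * (h y)^2 \<ge> 0" using cpos knn by auto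
    then show ?thesis using G'int[OF that] by (smt (verit) zero_le_power2)
  qed
  have contG: "continuous_on {-l..l} G" by (rule DERIV_continuous_on[OF DG])
  have Gat: "(G has_real_derivative G' y) (at y)" if "y \<in> {-l<..<l}" for y
    using DG[of y] that at_within_Icc_at[of "-l" y l] by auto
  have dec: "G a \<ge> G b" if "-l \<le> a" "a \<le> b" "b \<le> l" for a b
  proof (rule DERIV_nonpos_imp_decreasing_open[OF that(2)])
    fix x assume "a < x" "x < b"
    then have "x \<in> {-l<..<l}" using that by auto
    then show "\<exists>y. DERIV G x :> y \<and> y \<le> 0" using Gat G'nonpos by blast
  next
    show "continuous_on {a..b} G" by (rule continuous_on_subset[OF contG]) (use that in auto)
  qed
  have Gl: "G l = 0" "G (-l) = 0" unfolding G_def using bc by auto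
  have G0: "G y = 0" if "y \<in> {-l..l}" for y
    using dec[of "-l" y] dec[of y l] that Gl lpos by force
  have h1z: "h1 y = 0" if y: "y \<in> {-l<..<l}" for y
  proof -
    have "G' y = 0"
    proof (rule DERIV_local_const[OF Gat[OF y]])
      show "0 < min (y + l) (l - y)" using y by auto
      show "\<forall>z. \<bar>y - z\<bar> < min (y + l) (l - y) \<longrightarrow> G y = G z"
        using y by (auto intro!: trans[OF G0 G0[symmetric]])
    qed
    then have "(h2 y)^2 + c * (h1 y)^2 + k * (h y)^2 = 0" using G'int[OF y] by simp
    moreover have "c * (h1 y)^2 \<ge> 0" "k * (h y)^2 \<ge> 0" using cpos knn by auto
    ultimately have "c * (h1 y)^2 = 0" by (smt (verit) zero_le_power2)
    then show ?thesis using cpos by simp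
  qed
  have conth: "continuous_on {-l..l} h" using D by (intro DERIV_continuous_on) blast
  show ?thesis
  proof
    fix y assume y: "y \<in> {-l..l}"
    have "h y = h (-l)"
    proof (rule DERIV_isconst2[of "-l" l h])
      show "- l < l" using lpos by simp
      show "continuous_on {- l..l} h" by (rule conth)
      fix x assume "-l < x" "x < l"
      then have x: "x \<in> {-l<..<l}" by auto
      have "(h has_real_derivative h1 x) (at x)"
        using D[of x] x at_within_Icc_at[of "-l" x l] by auto
      then show "DERIV h x :> 0" using h1z[OF x] by simp
    qed (use y in auto)
    then show "h y = 0" using bc by simp
  qed
qed

theorem mainTheorem2:
  fixes l :: real and m :: nat
  assumes "l > 0" and "m \<ge> 1"
  shows "(\<forall>lam h. 0 < lam \<and> lam \<le> (real m)^2 \<and> mode_solution l m lam h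
              \<longrightarrow> (\<forall>y\<in>{-l..l}. h y = 0))
       \<and> (\<forall>lam h. 0 < lam \<and> mode_solution l m lam h \<and> (\<exists>y\<in>{-l..l}. h y \<noteq> 0)
              \<longrightarrow> lam > (real m)^2)"
  using part1[OF assms] by (meson not_less)

end
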